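(* Let $F:\mathbb{R}^d\to\mathbb{R}^d$ be $L$-Lipschitz, $G:\mathbb{R}^d\rightrightarrows\mathbb{R}^d$ maximally monotone, the solution set of $0\in F(x)+G(x)$ nonempty, $F+G$ maximally $\rho$-cohypomonotone with $\rho>0$, and $\eta>\rho$. Let $\alpha=1-\frac\rho\eta$, $\beta_k=\frac1{k+2}$, $x^\star$ a solution, and suppose $(x_k)$ satisfies $x_{k+1}=\beta_kx_0+(1-\beta_k)((1-\alpha)x_k+\alpha\widetilde J_k)$ with $\|J_{\eta(F+G)}(x_k)-\widetilde J_k\|\le\varepsilon_k$ for some $\varepsilon_k>0$. Then for $k\ge0$, $$\|x_{k+1}-x^\star\|\le\|x_0-x^\star\|+\Big(1-\frac\rho\eta\Big)\frac1{k+2}\sum_{i=0}^k(i+1)\varepsilon_i.$$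
   Context: For an operator $A$, $J_A=(\mathrm{Id}+A)^{-1}$. $F+G$ is $\rho$-cohypomonotone if $\langle u-v,x-y\rangle\ge-\rho\|u-v\|^2$ for all $(x,u),(y,v)$ in its graph; maximal means its graph is not strictly contained in that of another $\rho$-cohypomonotone operator. *)

theory Defs
  imports "HOL-Analysis.Analysis"
begin

definition monotone_op :: "('a::real_inner \<Rightarrow> 'a set) \<Rightarrow> bool" where
  "monotone_op A \<longleftrightarrow> (\<forall>x y u v. u \<in> A x \<longrightarrow> v \<in> A y \<longrightarrow> inner (u - v) (x - y) \<ge> 0)"

definition max_monotone_op :: "('a::real_inner \<Rightarrow> 'a set) \<Rightarrow> bool" where
  "max_monotone_op A \<longleftrightarrow> monotone_op A \<and>
     (\<forall>B. monotone_op B \<longrightarrow> (\<forall>x. A x \<subseteq> B x) \<longrightarrow> B = A)"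

definition cohypomonotone :: "real \<Rightarrow> ('a::real_inner \<Rightarrow> 'a set) \<Rightarrow> bool" where
  "cohypomonotone \<rho> A \<longleftrightarrow>
     (\<forall>x y u v. u \<in> A x \<longrightarrow> v \<in> A y \<longrightarrow> inner (u - v) (x - y) \<ge> - \<rho> * (norm (u - v))\<^sup>2)"

definition max_cohypomonotone :: "real \<Rightarrow> ('a::real_inner \<Rightarrow> 'a set) \<Rightarrow> bool" where
  "max_cohypomonotone \<rho> A \<longleftrightarrow> cohypomonotone \<rho> A \<and>
     (\<forall>B. cohypomonotone \<rho> B \<longrightarrow> (\<forall>x. A x \<subseteq> B x) \<longrightarrow> B = A)"

definition sum_op :: "('a::real_vector \<Rightarrow> 'a) \<Rightarrow> ('a \<Rightarrow> 'a set) \<Rightarrow> 'a \<Rightarrow> 'a set" where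
  "sum_op F G x = (\<lambda>u. F x + u) ` G x"

text \<open>Resolvent J_{eta A} = (Id + eta A)^{-1}, as a set-valued map:
  p is in J x iff x is in p + eta A p.\<close>
definition resolvent :: "real \<Rightarrow> ('a::real_vector \<Rightarrow> 'a set) \<Rightarrow> 'a \<Rightarrow> 'a set" where
  "resolvent \<eta> A x = {p. x - p \<in> (\<lambda>u. \<eta> *\<^sub>R u) ` A p}"

end

theory Submission imports Defs begin

lemma nonexp:
  fixes a b :: "'a::real_inner" and t :: real
  assumes "0 < t" "t < 1" "inner (a - b) b \<ge> - t * (norm (a - b))\<^sup>2"
  shows "norm (t *\<^sub>R a + (1 - t) *\<^sub>R b) \<le> norm a"
proof -
  have e: "t *\<^sub>R a + (1 - t) *\<^sub>R b = b + t *\<^sub>R (a - b)" by (simp add: algebra_simps)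
  have a: "a = b + (a - b)" by simp
  define c where "c = a - b"
  have h: "inner c b \<ge> - t * inner c c" using assms(3) by (simp add: c_def power2_norm_eq_inner)
  have "(norm (b + t *\<^sub>R c))\<^sup>2 = inner b b + 2 * t * inner c b + t^2 * inner c c"
    unfolding power2_norm_eq_inner by (simp add: inner_add_left inner_add_right inner_commute power2_eq_square algebra_simps)
  also have "\<dots> \<le> inner b b + 2 * inner c b + inner c c"
  proof -
    have "0 \<le> (1 - t) * (2 * inner c b + (1 + t) * inner c c)"
    proof -
      have "0 \<le> (1 - t) * inner c c" using assms(2) by simp
      then have "0 \<le> 2 * inner c b + (1 + t) * inner c c" using h by (simp add: algebra_simps)
      then show ?thesis using assms(2) by simp
    qed
    moreover have "(inner b b + 2 * inner c b + inner c c) - (inner b b + 2 * t * inner c b + t^2 * inner c c)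
       = (1 - t) * (2 * inner c b + (1 + t) * inner c c)" by (simp add: algebra_simps power2_eq_square)
    ultimately show ?thesis by linarith
  qed
  also have "\<dots> = (norm (b + c))\<^sup>2"
    unfolding power2_norm_eq_inner by (simp add: inner_add_left inner_add_right inner_commute)
  finally have "(norm (b + t *\<^sub>R c))\<^sup>2 \<le> (norm (b + c))\<^sup>2" .
  then have "norm (b + t *\<^sub>R c) \<le> norm (b + c)" by (rule power2_le_imp_le) simp
  moreover have "b + c = a" unfolding c_def by simp
  ultimately show ?thesis unfolding e c_def by simp
qed

theorem lemmaA2:
  fixes F :: "'a::euclidean_space \<Rightarrow> 'a" and G :: "'a \<Rightarrow> 'a set"
    and L \<rho> \<eta> :: real and xs :: 'a and x Jt :: "nat \<Rightarrow> 'a" and \<epsilon> :: "nat \<Rightarrow> real"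
  assumes lip: "L-lipschitz_on UNIV F"
    and G_mono: "max_monotone_op G"
    and sol_ne: "\<exists>z. 0 \<in> sum_op F G z"
    and cohypo: "max_cohypomonotone \<rho> (sum_op F G)"
    and rho_pos: "\<rho> > 0"
    and eta_gt: "\<eta> > \<rho>"
    and xs_sol: "0 \<in> sum_op F G xs"
    and eps_pos: "\<And>k. \<epsilon> k > 0"
    and approx: "\<And>k. \<exists>p \<in> resolvent \<eta> (sum_op F G) (x k). norm (p - Jt k) \<le> \<epsilon> k"
    and iter: "\<And>k. x (Suc k) = (1 / (real k + 2)) *\<^sub>R x 0
        + (1 - 1 / (real k + 2)) *\<^sub>R ((1 - (1 - \<rho> / \<eta>)) *\<^sub>R x k + (1 - \<rho> / \<eta>) *\<^sub>R Jt k)"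
  shows "norm (x (Suc k) - xs) \<le> norm (x 0 - xs)
      + (1 - \<rho> / \<eta>) * (1 / (real k + 2)) * (\<Sum>i = 0..k. (real i + 1) * \<epsilon> i)"
proof -
  define t where "t = \<rho> / \<eta>"
  define D where "D = norm (x 0 - xs)"
  have t0: "0 < t" and t1: "t < 1" using rho_pos eta_gt by (auto simp: t_def)
  have etap: "\<eta> > 0" using rho_pos eta_gt by simp
  have step: "norm (x (Suc n) - xs) \<le> (1 / (real n + 2)) * D
      + (1 - 1 / (real n + 2)) * (norm (x n - xs) + (1 - t) * \<epsilon> n)" for n
  proof -
    obtain p where pJ: "p \<in> resolvent \<eta> (sum_op F G) (x n)" and pe: "norm (p - Jt n) \<le> \<epsilon> n"
      using approx[of n] by blast
    obtain u where u: "u \<in> sum_op F G p" and xu: "x n - p = \<eta> *\<^sub>R u"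
      using pJ unfolding resolvent_def by auto
    have ch: "inner (u - 0) (p - xs) \<ge> - \<rho> * (norm (u - 0))\<^sup>2"
      using cohypo u xs_sol unfolding max_cohypomonotone_def cohypomonotone_def by blast
    have "inner ((x n - xs) - (p - xs)) (p - xs) = \<eta> * inner u (p - xs)"
      using xu by simp
    also have "\<dots> \<ge> \<eta> * (- \<rho> * (norm u)\<^sup>2)" using mult_left_mono[OF ch less_imp_le[OF etap]] by simp
    finally have c1: "inner ((x n - xs) - (p - xs)) (p - xs) \<ge> \<eta> * (- \<rho> * (norm u)\<^sup>2)" .
    have "- t * (norm ((x n - xs) - (p - xs)))\<^sup>2 = \<eta> * (- \<rho> * (norm u)\<^sup>2)"
      using xu etap by (simp add: t_def power2_eq_square field_simps)
    with c1 have "inner ((x n - xs) - (p - xs)) (p - xs) \<ge> - t * (norm ((x n - xs) - (p - xs)))\<^sup>2" by simp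
    from nonexp[OF t0 t1 this]
    have T: "norm (t *\<^sub>R (x n - xs) + (1 - t) *\<^sub>R (p - xs)) \<le> norm (x n - xs)" .
    define \<beta> where "\<beta> = 1 / (real n + 2)"
    have b0: "0 \<le> \<beta>" and b1: "\<beta> \<le> 1" by (auto simp: \<beta>_def)
    have eq: "x (Suc n) - xs = \<beta> *\<^sub>R (x 0 - xs) + (1 - \<beta>) *\<^sub>R
        ((t *\<^sub>R (x n - xs) + (1 - t) *\<^sub>R (p - xs)) + (1 - t) *\<^sub>R (Jt n - p))"
      unfolding iter[of n] \<beta>_def[symmetric] t_def[symmetric] by (simp add: algebra_simps)
    have "norm (x (Suc n) - xs) \<le> \<beta> * D + (1 - \<beta>) *
        norm ((t *\<^sub>R (x n - xs) + (1 - t) *\<^sub>R (p - xs)) + (1 - t) *\<^sub>R (Jt n - p))"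
      unfolding eq D_def using b0 b1
      by (metis (no_types, lifting) abs_of_nonneg diff_ge_0_iff_ge norm_scaleR norm_triangle_ineq)
    also have "\<dots> \<le> \<beta> * D + (1 - \<beta>) * (norm (x n - xs) + (1 - t) * \<epsilon> n)"
    proof -
      have "norm ((1 - t) *\<^sub>R (Jt n - p)) \<le> (1 - t) * \<epsilon> n"
        using pe t1 by (simp add: norm_minus_commute mult_left_mono)
      then have "norm ((t *\<^sub>R (x n - xs) + (1 - t) *\<^sub>R (p - xs)) + (1 - t) *\<^sub>R (Jt n - p))
          \<le> norm (x n - xs) + (1 - t) * \<epsilon> n"
        using T norm_triangle_ineq order_trans add_mono by (smt (verit))
      then show ?thesis using b1 by (simp add: mult_left_mono)
    qed
    finally show ?thesis unfolding \<beta>_def .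
  qed
  have main: "(real n + 1) * norm (x n - xs) \<le> (real n + 1) * D + (1 - t) * (\<Sum>i<n. (real i + 1) * \<epsilon> i)" for n
  proof (induction n)
    case 0 then show ?case by (simp add: D_def)
  next
    case (Suc n)
    have "(real n + 2) * norm (x (Suc n) - xs) \<le> D + (real n + 1) * (norm (x n - xs) + (1 - t) * \<epsilon> n)"
    proof -
      have "(real n + 2) * norm (x (Suc n) - xs) \<le> (real n + 2) * ((1 / (real n + 2)) * D
      + (1 - 1 / (real n + 2)) * (norm (x n - xs) + (1 - t) * \<epsilon> n))"
        using step[of n] by (intro mult_left_mono) auto
      also have "\<dots> = D + (real n + 1) * (norm (x n - xs) + (1 - t) * \<epsilon> n)"
      proof -
        have g: "(m + 2) * ((1 / (m + 2)) * D + (1 - 1 / (m + 2)) * Y) = D + (m + 1) * Y"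
          if "m \<ge> 0" for m Y :: real
        proof -
          have "1 - 1 / (m + 2) = (m + 1) / (m + 2)" using that by (simp add: field_simps)
          then show ?thesis using that by (simp add: distrib_left)
        qed
        show ?thesis by (rule g) simp
      qed
      finally show ?thesis .
    qed
    also have "\<dots> \<le> D + (real n + 1) * D + (1 - t) * (\<Sum>i<n. (real i + 1) * \<epsilon> i) + (1 - t) * (real n + 1) * \<epsilon> n"
      using Suc.IH by (simp add: algebra_simps)
    also have "\<dots> = (real (Suc n) + 1) * D + (1 - t) * (\<Sum>i<Suc n. (real i + 1) * \<epsilon> i)"
      by (simp add: algebra_simps)
    finally show ?case by (simp add: add.commute)
  qed
  have "(real (Suc k) + 1) * norm (x (Suc k) - xs) \<le> (real (Suc k) + 1) * D + (1 - t) * (\<Sum>i<Suc k. (real i + 1) * \<epsilon> i)"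
    by (rule main)
  moreover have "{..<Suc k} = {0..k}" by auto
  ultimately have "(real k + 2) * norm (x (Suc k) - xs) \<le> (real k + 2) * D + (1 - t) * (\<Sum>i=0..k. (real i + 1) * \<epsilon> i)"
    by (simp add: add.commute add.left_commute)
  then have "norm (x (Suc k) - xs) \<le> D + (1 - t) * (1 / (real k + 2)) * (\<Sum>i=0..k. (real i + 1) * \<epsilon> i)"
    by (simp add: field_simps)
  then show ?thesis by (simp add: D_def t_def)
qed

end
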